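(* As formal power series in $x$, $$\sum_{n\ge 0}\left\langle {n \atop 2}\right\rangle_{\!2}x^n=\frac{x^2-x^3-x^4-3x^5+5x^6}{(1-x)^3(1-2x)^2(1-5x+5x^2)}.$$
   Context: A $c$-rook placement on an $n\times n$ board is a placement of $cn$ rooks on the cells, several rooks being allowed in the same cell, such that every row and every column contains exactly $c$ rooks (equivalently, an $n\times n$ matrix of nonnegative integers with all row and column sums equal to $c$). A drop is a rook lying strictly below the main diagonal, i.e.\ in a cell $(i,j)$ (row $i$, column $j$) with $i>j$, counted with multiplicity. The generalized Eulerian number $\left\langle {n \atop k}\right\rangle_{\!c}$ is the number of $c$-rook placements on the $n\times n$ board with exactly $k$ drops; for $n=0$ (empty board, only zero drops possible) $\left\langle {0 \atop k}\right\rangle_{\!c}=0$ when $k\ge1$. *)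

theory Defs
  imports Main "HOL-Computational_Algebra.Formal_Power_Series"
begin

definition rook_placements :: "nat \<Rightarrow> nat \<Rightarrow> (nat \<Rightarrow> nat \<Rightarrow> nat) set" where
  "rook_placements c n =
     {A. (\<forall>i j. (n \<le> i \<or> n \<le> j) \<longrightarrow> A i j = 0)
       \<and> (\<forall>i<n. (\<Sum>j<n. A i j) = c)
       \<and> (\<forall>j<n. (\<Sum>i<n. A i j) = c)}"

definition drops :: "nat \<Rightarrow> (nat \<Rightarrow> nat \<Rightarrow> nat) \<Rightarrow> nat" where
  "drops n A = (\<Sum>i<n. \<Sum>j<i. A i j)"

definition gen_eulerian :: "nat \<Rightarrow> nat \<Rightarrow> nat \<Rightarrow> nat" where
  "gen_eulerian c n k = card {A \<in> rook_placements c n. drops n A = k}"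

end

theory Submission
  imports Defs
begin
unbundle fps_syntax


type_synonym obj = "(nat\<Rightarrow>nat\<Rightarrow>nat) \<times> (bool\<Rightarrow>nat\<Rightarrow>nat) \<times> (nat\<Rightarrow>bool\<Rightarrow>nat)"

definition Obj :: "nat \<Rightarrow> nat \<Rightarrow> nat \<Rightarrow> nat \<Rightarrow> nat \<Rightarrow> nat \<Rightarrow> obj set" where
"Obj n ra rb ca cb k = {(A,X,Y).
  (\<forall>i j. (n \<le> i \<or> n \<le> j) \<longrightarrow> A i j = 0) \<and> (\<forall>s j. n \<le> j \<longrightarrow> X s j = 0) \<and> (\<forall>i s. n \<le> i \<longrightarrow> Y i s = 0) \<and>
  (\<forall>i<n. (\<Sum>j<n. A i j) + Y i True + Y i False = 2) \<and>
  (\<forall>j<n. (\<Sum>i<n. A i j) + X True j + X False j = 2) \<and>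
  (\<Sum>j<n. X True j) = ra \<and> (\<Sum>j<n. X False j) = rb \<and>
  (\<Sum>i<n. Y i True) = ca \<and> (\<Sum>i<n. Y i False) = cb \<and> drops n A = k}"

definition Pch :: "nat \<Rightarrow> nat \<Rightarrow> nat \<Rightarrow> nat \<Rightarrow> nat \<Rightarrow> nat\<times>nat\<times>nat\<times>nat\<times>nat \<Rightarrow> bool" where
"Pch ra rb ca cb k ch = (case ch of (d,uT,uF,vT,vF) \<Rightarrow> d+uT+uF \<le> 2 \<and> d+vT+vF \<le> 2 \<and> uT \<le> ca \<and> uF \<le> cb \<and> vT \<le> ra \<and> vF \<le> rb \<and>
   2-(d+uT+uF) \<le> k \<and> (0 < 2-(d+uT+uF) \<longrightarrow> ra = vT \<or> rb = vF) \<and> (0 < 2-(d+vT+vF) \<longrightarrow> ca = uT \<or> cb = uF))"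

definition nra :: "nat \<Rightarrow> nat\<times>nat\<times>nat\<times>nat\<times>nat \<Rightarrow> nat" where
"nra ra ch = (case ch of (d,uT,uF,vT,vF) \<Rightarrow> ra - vT + (if ra = vT then 2-(d+uT+uF) else 0))"
definition nrb :: "nat \<Rightarrow> nat \<Rightarrow> nat\<times>nat\<times>nat\<times>nat\<times>nat \<Rightarrow> nat" where
"nrb ra rb ch = (case ch of (d,uT,uF,vT,vF) \<Rightarrow> rb - vF + (if ra = vT then 0 else 2-(d+uT+uF)))"
definition nca :: "nat \<Rightarrow> nat\<times>nat\<times>nat\<times>nat\<times>nat \<Rightarrow> nat" where
"nca ca ch = (case ch of (d,uT,uF,vT,vF) \<Rightarrow> ca - uT + (if ca = uT then 2-(d+vT+vF) else 0))"
definition ncb :: "nat \<Rightarrow> nat \<Rightarrow> nat\<times>nat\<times>nat\<times>nat\<times>nat \<Rightarrow> nat" where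
"ncb ca cb ch = (case ch of (d,uT,uF,vT,vF) \<Rightarrow> cb - uF + (if ca = uT then 0 else 2-(d+vT+vF)))"
definition nk :: "nat \<Rightarrow> nat\<times>nat\<times>nat\<times>nat\<times>nat \<Rightarrow> nat" where
"nk k ch = (case ch of (d,uT,uF,vT,vF) \<Rightarrow> k - (2-(d+uT+uF)))"

definition Dset :: "nat \<Rightarrow> nat \<Rightarrow> nat \<Rightarrow> nat \<Rightarrow> (nat\<times>nat\<times>nat\<times>nat\<times>nat) set" where
"Dset ra rb ca cb = {..2::nat} \<times> {..ca} \<times> {..cb} \<times> {..ra} \<times> {..rb}"

fun Tc :: "nat \<Rightarrow> nat \<Rightarrow> nat \<Rightarrow> nat \<Rightarrow> nat \<Rightarrow> nat \<Rightarrow> nat" where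
"Tc 0 ra rb ca cb k = (if ra = 0 \<and> rb = 0 \<and> ca = 0 \<and> cb = 0 \<and> k = 0 then 1 else 0)"
| "Tc (Suc m) ra rb ca cb k = (\<Sum>ch \<in> Dset ra rb ca cb. if Pch ra rb ca cb k ch then
     Tc m (nra ra ch) (nrb ra rb ch) (nca ca ch) (ncb ca cb ch) (nk k ch) else 0)"

definition fch :: "nat \<Rightarrow> obj \<Rightarrow> nat\<times>nat\<times>nat\<times>nat\<times>nat" where
"fch m ob = (case ob of (A,X,Y) \<Rightarrow> (A m m, Y m True, Y m False, X True m, X False m))"

definition gmap :: "nat \<Rightarrow> nat \<Rightarrow> nat \<Rightarrow> obj \<Rightarrow> obj" where
"gmap m ra ca ob = (case ob of (A,X,Y) \<Rightarrow>
   ((\<lambda>i j. if i < m \<and> j < m then A i j else 0),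
    (\<lambda>s j. if j < m then X s j + (if s = (ra = X True m) then A m j else 0) else 0),
    (\<lambda>i s. if i < m then Y i s + (if s = (ca = Y m True) then A i m else 0) else 0)))"

definition hmap :: "nat \<Rightarrow> nat \<Rightarrow> nat \<Rightarrow> nat\<times>nat\<times>nat\<times>nat\<times>nat \<Rightarrow> obj \<Rightarrow> obj" where
"hmap m ra ca ch ob = (case ch of (d,uT,uF,vT,vF) \<Rightarrow> case ob of (A,X,Y) \<Rightarrow>
   ((\<lambda>i j. if i < m \<and> j < m then A i j
           else if i = m \<and> j < m then (if 0 < 2-(d+uT+uF) then X (ra = vT) j else 0)
           else if i < m \<and> j = m then (if 0 < 2-(d+vT+vF) then Y i (ca = uT) else 0)
           else if i = m \<and> j = m then d else 0),
    (\<lambda>s j. if j < m then (if 0 < 2-(d+uT+uF) \<and> s = (ra = vT) then 0 else X s j)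
           else if j = m then (if s then vT else vF) else 0),
    (\<lambda>i s. if i < m then (if 0 < 2-(d+vT+vF) \<and> s = (ca = uT) then 0 else Y i s)
           else if i = m then (if s then uT else uF) else 0)))"

lemma drops_Suc: "drops (Suc m) A = drops m A + (\<Sum>j<m. A m j)"
  by (simp add: drops_def)

lemma drops_cong: "(\<And>i j. i < m \<Longrightarrow> j < m \<Longrightarrow> A i j = B i j) \<Longrightarrow> drops m A = drops m B"
  unfolding drops_def by (intro sum.cong refl) auto

lemma ObjI: "(A,X,Y) \<in> Obj n ra rb ca cb k \<longleftrightarrow>
  (\<forall>i j. (n \<le> i \<or> n \<le> j) \<longrightarrow> A i j = 0) \<and> (\<forall>s j. n \<le> j \<longrightarrow> X s j = 0) \<and> (\<forall>i s. n \<le> i \<longrightarrow> Y i s = 0) \<and>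
  (\<forall>i<n. (\<Sum>j<n. A i j) + Y i True + Y i False = 2) \<and>
  (\<forall>j<n. (\<Sum>i<n. A i j) + X True j + X False j = 2) \<and>
  (\<Sum>j<n. X True j) = ra \<and> (\<Sum>j<n. X False j) = rb \<and>
  (\<Sum>i<n. Y i True) = ca \<and> (\<Sum>i<n. Y i False) = cb \<and> drops n A = k"
  by (simp add: Obj_def)

lemma P_arith:
  fixes a b xT xF yT yF D d uT uF vT vF ra rb ca cb k :: nat
  assumes "a + d + uT + uF = 2" "b + d + vT + vF = 2" "xT + vT = ra" "xF + vF = rb"
    "yT + uT = ca" "yF + uF = cb" "D + a = k" "ra+rb+k \<le> 2" "ca+cb+k\<le>2"
  shows "Pch ra rb ca cb k (d,uT,uF,vT,vF) \<and> d \<le> 2"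
  using assms unfolding Pch_def by auto

lemma fch_P:
  assumes o: "(A,X,Y) \<in> Obj (Suc m) ra rb ca cb k" and inv: "ra+rb+k \<le> 2" "ca+cb+k \<le> 2"
  shows "Pch ra rb ca cb k (fch m (A,X,Y)) \<and> fch m (A,X,Y) \<in> Dset ra rb ca cb"
proof -
  note O = o[unfolded ObjI]
  have rm: "(\<Sum>j<m. A m j) + A m m + Y m True + Y m False = 2"
    using O by (auto simp: sum.lessThan_Suc)
  have cm: "(\<Sum>i<m. A i m) + A m m + X True m + X False m = 2"
    using O by (auto simp: sum.lessThan_Suc)
  have xt: "(\<Sum>j<m. X True j) + X True m = ra" and xf: "(\<Sum>j<m. X False j) + X False m = rb"
   and yt: "(\<Sum>i<m. Y i True) + Y m True = ca" and yf: "(\<Sum>i<m. Y i False) + Y m False = cb"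
    using O by (auto simp: sum.lessThan_Suc)
  have dk: "drops m A + (\<Sum>j<m. A m j) = k" using O by (simp add: drops_Suc)
  show ?thesis
    unfolding fch_def using P_arith[OF rm cm xt xf yt yf dk inv] by (simp add: Dset_def Pch_def)
qed

lemma sum_if_lt[simp]: "(\<Sum>j<m. if j < m then f j else (0::nat)) = (\<Sum>j<m. f j)"
  by (rule sum.cong) auto

lemma sum_if_lt2[simp]: "(\<Sum>j<m. if i < m \<and> j < m then f j else (0::nat)) = (if i < m then \<Sum>j<m. f j else 0)"
  by (cases "i < m") (auto intro: sum.cong)

lemma sum_if_lt3[simp]: "(\<Sum>i<m. if i < m \<and> j < m then f i else (0::nat)) = (if j < m then \<Sum>i<m. f i else 0)"
  by (cases "j < m") (auto intro: sum.cong)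

lemma g_in:
  assumes o: "(A,X,Y) \<in> Obj (Suc m) ra rb ca cb k"
  shows "gmap m ra ca (A,X,Y) \<in> Obj m (nra ra (fch m (A,X,Y))) (nrb ra rb (fch m (A,X,Y)))
            (nca ca (fch m (A,X,Y))) (ncb ca cb (fch m (A,X,Y))) (nk k (fch m (A,X,Y)))"
proof -
  note O = o[unfolded ObjI]
  have sA: "\<And>i j. (Suc m \<le> i \<or> Suc m \<le> j) \<Longrightarrow> A i j = 0" using O by blast
  have sX: "\<And>s j. Suc m \<le> j \<Longrightarrow> X s j = 0" using O by blast
  have sY: "\<And>i s. Suc m \<le> i \<Longrightarrow> Y i s = 0" using O by blast
  have row: "\<And>i. i < m \<Longrightarrow> (\<Sum>j<m. A i j) + A i m + Y i True + Y i False = 2"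
    using O by (auto simp: sum.lessThan_Suc)
  have col: "\<And>j. j < m \<Longrightarrow> (\<Sum>i<m. A i j) + A m j + X True j + X False j = 2"
    using O by (auto simp: sum.lessThan_Suc)
  have rm: "(\<Sum>j<m. A m j) + A m m + Y m True + Y m False = 2"
    using O by (auto simp: sum.lessThan_Suc)
  have cm: "(\<Sum>i<m. A i m) + A m m + X True m + X False m = 2"
    using O by (auto simp: sum.lessThan_Suc)
  have xt: "(\<Sum>j<m. X True j) + X True m = ra" and xf: "(\<Sum>j<m. X False j) + X False m = rb"
   and yt: "(\<Sum>i<m. Y i True) + Y m True = ca" and yf: "(\<Sum>i<m. Y i False) + Y m False = cb"
    using O by (auto simp: sum.lessThan_Suc)
  have dk: "drops m A + (\<Sum>j<m. A m j) = k" using O by (simp add: drops_Suc)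
  have dr: "drops m (\<lambda>i j. if i < m \<and> j < m then A i j else 0) = drops m A"
    by (rule drops_cong) auto
  show ?thesis
    unfolding gmap_def fch_def nra_def nrb_def nca_def ncb_def nk_def
    apply (simp only: prod.case ObjI)
    apply (intro conjI)
    subgoal by auto
    subgoal by auto
    subgoal by auto
    subgoal using row by (cases "ca = Y m True") (auto simp: sum.distrib add_ac)
    subgoal using col by (cases "ra = X True m") (auto simp: sum.distrib add_ac)
    subgoal using xt rm by (cases "ra = X True m") (auto simp: sum.distrib)
    subgoal using xf rm by (cases "ra = X True m") (auto simp: sum.distrib)
    subgoal using yt cm by (cases "ca = Y m True") (auto simp: sum.distrib)
    subgoal using yf cm by (cases "ca = Y m True") (auto simp: sum.distrib)
    subgoal using dk rm dr by simp
    done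
qed

lemma h_in:
  assumes o': "(A',X',Y') \<in> Obj m (nra ra ch) (nrb ra rb ch) (nca ca ch) (ncb ca cb ch) (nk k ch)"
    and P: "Pch ra rb ca cb k ch"
  shows "hmap m ra ca ch (A',X',Y') \<in> Obj (Suc m) ra rb ca cb k \<and> fch m (hmap m ra ca ch (A',X',Y')) = ch"
proof -
  obtain d uT uF vT vF where ch: "ch = (d,uT,uF,vT,vF)" by (cases ch) auto
  define \<rho> where "\<rho> = 2-(d+uT+uF)"
  define \<gamma> where "\<gamma> = 2-(d+vT+vF)"
  define ps where "ps = (ra = vT)"
  define pc where "pc = (ca = uT)"
  define A where "A = (\<lambda>i j. if i < m \<and> j < m then A' i j
           else if i = m \<and> j < m then (if 0 < \<rho> then X' ps j else 0)
           else if i < m \<and> j = m then (if 0 < \<gamma> then Y' i pc else 0)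
           else if i = m \<and> j = m then d else 0)"
  define X where "X = (\<lambda>s j. if j < m then (if 0 < \<rho> \<and> s = ps then 0 else X' s j)
           else if j = m then (if s then vT else vF) else 0)"
  define Y where "Y = (\<lambda>i s. if i < m then (if 0 < \<gamma> \<and> s = pc then 0 else Y' i s)
           else if i = m then (if s then uT else uF) else 0)"
  have H: "hmap m ra ca ch (A',X',Y') = (A,X,Y)"
    unfolding hmap_def ch A_def X_def Y_def \<rho>_def \<gamma>_def ps_def pc_def by simp
  have Pc: "d+uT+uF \<le> 2" "d+vT+vF \<le> 2" "uT \<le> ca" "uF \<le> cb" "vT \<le> ra" "vF \<le> rb" "\<rho> \<le> k"
      "0 < \<rho> \<Longrightarrow> ra = vT \<or> rb = vF" "0 < \<gamma> \<Longrightarrow> ca = uT \<or> cb = uF"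
    using P unfolding Pch_def ch \<rho>_def \<gamma>_def by auto
  note O = o'[unfolded ObjI ch nra_def nrb_def nca_def ncb_def nk_def prod.case, folded \<rho>_def \<gamma>_def ps_def pc_def]
  have sA: "\<And>i j. (m \<le> i \<or> m \<le> j) \<Longrightarrow> A' i j = 0" using O by blast
  have sX: "\<And>s j. m \<le> j \<Longrightarrow> X' s j = 0" using O by blast
  have sY: "\<And>i s. m \<le> i \<Longrightarrow> Y' i s = 0" using O by blast
  have row: "\<And>i. i < m \<Longrightarrow> (\<Sum>j<m. A' i j) + Y' i True + Y' i False = 2" using O by blast
  have col: "\<And>j. j < m \<Longrightarrow> (\<Sum>i<m. A' i j) + X' True j + X' False j = 2" using O by blast
  have xt: "(\<Sum>j<m. X' True j) = ra - vT + (if ps then \<rho> else 0)" using O by blast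
  have xf: "(\<Sum>j<m. X' False j) = rb - vF + (if ps then 0 else \<rho>)" using O by blast
  have yt: "(\<Sum>i<m. Y' i True) = ca - uT + (if pc then \<gamma> else 0)" using O by blast
  have yf: "(\<Sum>i<m. Y' i False) = cb - uF + (if pc then 0 else \<gamma>)" using O by blast
  have dk: "drops m A' = k - \<rho>" using O by blast
  have xps: "0 < \<rho> \<Longrightarrow> (\<Sum>j<m. X' ps j) = \<rho>"
    using xt xf Pc(8) unfolding ps_def by (cases "ra = vT") auto
  have yps: "0 < \<gamma> \<Longrightarrow> (\<Sum>i<m. Y' i pc) = \<gamma>"
    using yt yf Pc(9) unfolding pc_def by (cases "ca = uT") auto
  have A1: "\<And>i j. i < m \<Longrightarrow> j < m \<Longrightarrow> A i j = A' i j" by (simp add: A_def)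
  have A2: "\<And>j. j < m \<Longrightarrow> A m j = (if 0 < \<rho> then X' ps j else 0)" by (simp add: A_def)
  have A3: "\<And>i. i < m \<Longrightarrow> A i m = (if 0 < \<gamma> then Y' i pc else 0)" by (simp add: A_def)
  have A4: "A m m = d" by (simp add: A_def)
  have rowA: "\<And>i. i < m \<Longrightarrow> (\<Sum>j<m. A i j) = (\<Sum>j<m. A' i j)" by (rule sum.cong) (auto simp: A1)
  have colA: "\<And>j. j < m \<Longrightarrow> (\<Sum>i<m. A i j) = (\<Sum>i<m. A' i j)" by (rule sum.cong) (auto simp: A1)
  have rmA: "(\<Sum>j<m. A m j) = (if 0 < \<rho> then \<rho> else 0)"
    using xps by (cases "0 < \<rho>") (auto simp: A2 intro!: sum.neutral)
  have cmA: "(\<Sum>i<m. A i m) = (if 0 < \<gamma> then \<gamma> else 0)"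
    using yps by (cases "0 < \<gamma>") (auto simp: A3 intro!: sum.neutral)
  have XT: "(\<Sum>j<m. X True j) = (if 0 < \<rho> \<and> ps then 0 else \<Sum>j<m. X' True j)"
    by (auto simp: X_def intro!: sum.neutral)
  have XF: "(\<Sum>j<m. X False j) = (if 0 < \<rho> \<and> \<not>ps then 0 else \<Sum>j<m. X' False j)"
    by (auto simp: X_def intro!: sum.neutral)
  have YT: "(\<Sum>i<m. Y i True) = (if 0 < \<gamma> \<and> pc then 0 else \<Sum>i<m. Y' i True)"
    by (auto simp: Y_def intro!: sum.neutral)
  have YF: "(\<Sum>i<m. Y i False) = (if 0 < \<gamma> \<and> \<not>pc then 0 else \<Sum>i<m. Y' i False)"
    by (auto simp: Y_def intro!: sum.neutral)
  have drA: "drops m A = drops m A'" by (rule drops_cong) (simp add: A1)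
  have mem: "(A,X,Y) \<in> Obj (Suc m) ra rb ca cb k"
    unfolding ObjI
  proof (intro conjI allI impI)
    show "\<And>i j. Suc m \<le> i \<or> Suc m \<le> j \<Longrightarrow> A i j = 0" by (auto simp: A_def)
    show "\<And>s j. Suc m \<le> j \<Longrightarrow> X s j = 0" by (auto simp: X_def)
    show "\<And>i s. Suc m \<le> i \<Longrightarrow> Y i s = 0" by (auto simp: Y_def)
  next
    fix i assume i: "i < Suc m"
    show "(\<Sum>j<Suc m. A i j) + Y i True + Y i False = 2"
    proof (cases "i < m")
      case True
      then show ?thesis using row[OF True] rowA[OF True] A3[OF True]
        by (cases "0 < \<gamma>"; cases pc) (auto simp: Y_def)
    next
      case False
      then have "i = m" using i by auto
      then show ?thesis using rmA A4 Pc(1) by (simp add: Y_def \<rho>_def split: if_splits)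
    qed
  next
    fix j assume j: "j < Suc m"
    show "(\<Sum>i<Suc m. A i j) + X True j + X False j = 2"
    proof (cases "j < m")
      case True
      then show ?thesis using col[OF True] colA[OF True] A2[OF True]
        by (cases "0 < \<rho>"; cases ps) (auto simp: X_def)
    next
      case False
      then have "j = m" using j by auto
      then show ?thesis using cmA A4 Pc(2) by (simp add: X_def \<gamma>_def split: if_splits)
    qed
  next
    show "(\<Sum>j<Suc m. X True j) = ra" using XT xt Pc(5) by (auto simp: X_def ps_def)
    show "(\<Sum>j<Suc m. X False j) = rb" using XF xf Pc(6) Pc(8) by (auto simp: X_def ps_def)
    show "(\<Sum>i<Suc m. Y i True) = ca" using YT yt Pc(3) by (auto simp: Y_def pc_def)
    show "(\<Sum>i<Suc m. Y i False) = cb" using YF yf Pc(4) Pc(9) by (auto simp: Y_def pc_def)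
    show "drops (Suc m) A = k" using drA dk rmA Pc(7) by (simp add: drops_Suc)
  qed
  have "fch m (A,X,Y) = ch" by (simp add: fch_def ch A_def X_def Y_def)
  with mem H show ?thesis by simp
qed

lemma hg_id:
  assumes o: "(A,X,Y) \<in> Obj (Suc m) ra rb ca cb k" and inv: "ra+rb+k \<le> 2" "ca+cb+k \<le> 2"
  shows "hmap m ra ca (fch m (A,X,Y)) (gmap m ra ca (A,X,Y)) = (A,X,Y)"
proof -
  have Pf: "Pch ra rb ca cb k (fch m (A,X,Y))" using fch_P[OF o inv] by blast
  note O = o[unfolded ObjI]
  have sA: "\<And>i j. (Suc m \<le> i \<or> Suc m \<le> j) \<Longrightarrow> A i j = 0" using O by blast
  have sX: "\<And>s j. Suc m \<le> j \<Longrightarrow> X s j = 0" using O by blast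
  have sY: "\<And>i s. Suc m \<le> i \<Longrightarrow> Y i s = 0" using O by blast
  have rm: "(\<Sum>j<m. A m j) + A m m + Y m True + Y m False = 2"
    using O by (auto simp: sum.lessThan_Suc)
  have cm: "(\<Sum>i<m. A i m) + A m m + X True m + X False m = 2"
    using O by (auto simp: sum.lessThan_Suc)
  have xt: "(\<Sum>j<m. X True j) + X True m = ra" and xf: "(\<Sum>j<m. X False j) + X False m = rb"
   and yt: "(\<Sum>i<m. Y i True) + Y m True = ca" and yf: "(\<Sum>i<m. Y i False) + Y m False = cb"
    using O by (auto simp: sum.lessThan_Suc)
  define \<rho> where "\<rho> = 2 - (A m m + Y m True + Y m False)"
  define \<gamma> where "\<gamma> = 2 - (A m m + X True m + X False m)"
  define ps where "ps = (ra = X True m)"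
  define pc where "pc = (ca = Y m True)"
  have feas: "0 < \<rho> \<Longrightarrow> ra = X True m \<or> rb = X False m" "0 < \<gamma> \<Longrightarrow> ca = Y m True \<or> cb = Y m False"
    using Pf by (auto simp: Pch_def fch_def \<rho>_def \<gamma>_def)
  have rhoS: "(\<Sum>j<m. A m j) = \<rho>" using rm by (simp add: \<rho>_def)
  have gamS: "(\<Sum>i<m. A i m) = \<gamma>" using cm by (simp add: \<gamma>_def)
  have Xz: "\<And>j. 0 < \<rho> \<Longrightarrow> j < m \<Longrightarrow> X ps j = 0"
  proof -
    fix j assume r: "0 < \<rho>" and j: "j < m"
    have "(\<Sum>j<m. X ps j) = 0"
      using feas(1)[OF r] xt xf unfolding ps_def by (cases "ra = X True m") auto
    then show "X ps j = 0" using j by simp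
  qed
  have Yz: "\<And>i. 0 < \<gamma> \<Longrightarrow> i < m \<Longrightarrow> Y i pc = 0"
  proof -
    fix i assume r: "0 < \<gamma>" and i: "i < m"
    have "(\<Sum>i<m. Y i pc) = 0"
      using feas(2)[OF r] yt yf unfolding pc_def by (cases "ca = Y m True") auto
    then show "Y i pc = 0" using i by simp
  qed
  have Az1: "\<And>j. \<rho> = 0 \<Longrightarrow> j < m \<Longrightarrow> A m j = 0" using rhoS by simp
  have Az2: "\<And>i. \<gamma> = 0 \<Longrightarrow> i < m \<Longrightarrow> A i m = 0" using gamS by simp
  show ?thesis
    unfolding hmap_def gmap_def fch_def prod.case
    apply (fold \<rho>_def \<gamma>_def ps_def pc_def)
    apply (intro prod_eqI; simp only: fst_conv snd_conv)
    subgoal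
      apply (rule ext)+
      subgoal for i j
        using sA[of i j] Xz[of j] Yz[of i] Az1[of j] Az2[of i]
        by (auto simp: not_less)
      done
    subgoal
      apply (rule ext)+
      subgoal for s j
        using sX[of j s] Xz[of j] Az1[of j]
        by (cases s; cases ps) (auto simp: not_less ps_def)
      done
    subgoal
      apply (rule ext)+
      subgoal for i s
        using sY[of i s] Yz[of i] Az2[of i]
        by (cases s; cases pc) (auto simp: not_less pc_def)
      done
    done
qed

lemma gh_id:
  assumes o': "(A',X',Y') \<in> Obj m (nra ra ch) (nrb ra rb ch) (nca ca ch) (ncb ca cb ch) (nk k ch)"
  shows "gmap m ra ca (hmap m ra ca ch (A',X',Y')) = (A',X',Y')"
proof -
  obtain d uT uF vT vF where ch: "ch = (d,uT,uF,vT,vF)" by (cases ch) auto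
  note O = o'[unfolded ObjI]
  have sA: "\<And>i j. (m \<le> i \<or> m \<le> j) \<Longrightarrow> A' i j = 0" using O by blast
  have sX: "\<And>s j. m \<le> j \<Longrightarrow> X' s j = 0" using O by blast
  have sY: "\<And>i s. m \<le> i \<Longrightarrow> Y' i s = 0" using O by blast
  show ?thesis
    unfolding hmap_def gmap_def ch prod.case
    apply (intro prod_eqI; simp only: fst_conv snd_conv)
    subgoal
      apply (rule ext)+
      subgoal for i j using sA[of i j] by (auto simp: not_less)
      done
    subgoal
      apply (rule ext)+
      subgoal for s j using sX[of j s] by (cases s; cases "ra = vT") (auto simp: not_less)
      done
    subgoal
      apply (rule ext)+
      subgoal for i s using sY[of i s] by (cases s; cases "ca = uT") (auto simp: not_less)
      done
    done
qed

lemma inv_new: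
  assumes P: "Pch ra rb ca cb k ch" and inv: "ra+rb+k \<le> 2" "ca+cb+k \<le> 2"
  shows "nra ra ch + nrb ra rb ch + nk k ch \<le> 2 \<and> nca ca ch + ncb ca cb ch + nk k ch \<le> 2"
proof -
  obtain d uT uF vT vF where ch: "ch = (d,uT,uF,vT,vF)" by (cases ch) auto
  show ?thesis using P inv unfolding ch Pch_def nra_def nrb_def nca_def ncb_def nk_def prod.case
    by (auto split: if_splits)
qed

lemma Obj0: "Obj 0 ra rb ca cb k = (if ra=0 \<and> rb=0 \<and> ca=0 \<and> cb=0 \<and> k=0
   then {((\<lambda>_ _. 0), (\<lambda>_ _. 0), (\<lambda>_ _. 0))} else {})"
  by (auto simp: Obj_def drops_def fun_eq_iff)

lemma fiber_bij:
  assumes P: "Pch ra rb ca cb k ch" and inv: "ra+rb+k \<le> 2" "ca+cb+k \<le> 2"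
  shows "bij_betw (gmap m ra ca) {x \<in> Obj (Suc m) ra rb ca cb k. fch m x = ch}
     (Obj m (nra ra ch) (nrb ra rb ch) (nca ca ch) (ncb ca cb ch) (nk k ch))"
proof (rule bij_betw_byWitness[where f'="hmap m ra ca ch"])
  show "\<forall>a\<in>{x \<in> Obj (Suc m) ra rb ca cb k. fch m x = ch}. hmap m ra ca ch (gmap m ra ca a) = a"
    using hg_id[OF _ inv] by auto
  show "\<forall>a'\<in>Obj m (nra ra ch) (nrb ra rb ch) (nca ca ch) (ncb ca cb ch) (nk k ch).
          gmap m ra ca (hmap m ra ca ch a') = a'"
    by (auto intro!: gh_id)
  show "gmap m ra ca ` {x \<in> Obj (Suc m) ra rb ca cb k. fch m x = ch}
      \<subseteq> Obj m (nra ra ch) (nrb ra rb ch) (nca ca ch) (ncb ca cb ch) (nk k ch)"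
    using g_in by auto
  show "hmap m ra ca ch ` Obj m (nra ra ch) (nrb ra rb ch) (nca ca ch) (ncb ca cb ch) (nk k ch)
      \<subseteq> {x \<in> Obj (Suc m) ra rb ca cb k. fch m x = ch}"
    using h_in[OF _ P] by auto
qed

lemma card_Obj:
  "\<forall>ra rb ca cb k. ra+rb+k \<le> 2 \<longrightarrow> ca+cb+k \<le> 2 \<longrightarrow>
     finite (Obj n ra rb ca cb k) \<and> card (Obj n ra rb ca cb k) = Tc n ra rb ca cb k"
proof (induction n)
  case 0
  then show ?case by (simp add: Obj0)
next
  case (Suc m)
  show ?case
  proof (intro allI impI)
    fix ra rb ca cb k :: nat assume inv: "ra+rb+k \<le> 2" "ca+cb+k \<le> 2"
    define S where "S = Obj (Suc m) ra rb ca cb k"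
    define F where "F = (\<lambda>ch. {x \<in> S. fch m x = ch})"
    have Sun: "S = (\<Union>ch\<in>Dset ra rb ca cb. F ch)"
      using fch_P[OF _ inv] unfolding S_def F_def by fastforce
    have finD: "finite (Dset ra rb ca cb)" by (simp add: Dset_def)
    have Fch: "finite (F ch) \<and> card (F ch) = (if Pch ra rb ca cb k ch then
       Tc m (nra ra ch) (nrb ra rb ch) (nca ca ch) (ncb ca cb ch) (nk k ch) else 0)" for ch
    proof (cases "Pch ra rb ca cb k ch")
      case True
      have b: "bij_betw (gmap m ra ca) (F ch) (Obj m (nra ra ch) (nrb ra rb ch) (nca ca ch) (ncb ca cb ch) (nk k ch))"
        unfolding F_def S_def by (rule fiber_bij[OF True inv])
      have iv: "nra ra ch + nrb ra rb ch + nk k ch \<le> 2 \<and> nca ca ch + ncb ca cb ch + nk k ch \<le> 2"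
        by (rule inv_new[OF True inv])
      have ih: "finite (Obj m (nra ra ch) (nrb ra rb ch) (nca ca ch) (ncb ca cb ch) (nk k ch)) \<and>
          card (Obj m (nra ra ch) (nrb ra rb ch) (nca ca ch) (ncb ca cb ch) (nk k ch)) =
          Tc m (nra ra ch) (nrb ra rb ch) (nca ca ch) (ncb ca cb ch) (nk k ch)"
        using Suc.IH iv by blast
      show ?thesis using b ih True bij_betw_finite bij_betw_same_card by metis
    next
      case False
      have "F ch = {}" using fch_P[OF _ inv] False unfolding F_def S_def by fastforce
      then show ?thesis using False by simp
    qed
    have finS: "finite S" unfolding Sun using finD Fch by blast
    have "card S = (\<Sum>ch\<in>Dset ra rb ca cb. card (F ch))"
      unfolding Sun by (rule card_UN_disjoint[OF finD]) (use Fch in \<open>auto simp: F_def\<close>)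
    also have "\<dots> = Tc (Suc m) ra rb ca cb k"
      by (simp add: Fch)
    finally show "finite (Obj (Suc m) ra rb ca cb k) \<and> card (Obj (Suc m) ra rb ca cb k) = Tc (Suc m) ra rb ca cb k"
      using finS unfolding S_def by simp
  qed
qed

lemma gen_eulerian_Tc: "gen_eulerian 2 n 2 = Tc n 0 0 0 0 2"
proof -
  have "Obj n 0 0 0 0 2 = (\<lambda>A. (A, (\<lambda>_ _. 0), (\<lambda>_ _. 0))) ` {A \<in> rook_placements 2 n. drops n A = 2}"
  proof
    show "Obj n 0 0 0 0 2 \<subseteq> (\<lambda>A. (A, (\<lambda>_ _. 0), (\<lambda>_ _. 0))) ` {A \<in> rook_placements 2 n. drops n A = 2}"
    proof
      fix x assume x: "x \<in> Obj n 0 0 0 0 2"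
      obtain A X Y where xe: "x = (A,X,Y)" by (cases x) auto
      note O = x[unfolded xe ObjI]
      have X0: "X = (\<lambda>_ _. 0)"
      proof (intro ext)
        fix s j show "X s j = 0"
        proof (cases "j < n")
          case True then show ?thesis using O by (cases s) auto
        next
          case False then show ?thesis using O by auto
        qed
      qed
      have Y0: "Y = (\<lambda>_ _. 0)"
      proof (intro ext)
        fix i s show "Y i s = 0"
        proof (cases "i < n")
          case True then show ?thesis using O by (cases s) auto
        next
          case False then show ?thesis using O by auto
        qed
      qed
      have "A \<in> rook_placements 2 n" using O unfolding rook_placements_def X0 Y0 by auto
      then show "x \<in> (\<lambda>A. (A, (\<lambda>_ _. 0), (\<lambda>_ _. 0))) ` {A \<in> rook_placements 2 n. drops n A = 2}"
        using O xe X0 Y0 by auto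
    qed
    show "(\<lambda>A. (A, (\<lambda>_ _. 0), (\<lambda>_ _. 0))) ` {A \<in> rook_placements 2 n. drops n A = 2} \<subseteq> Obj n 0 0 0 0 2"
      by (auto simp: ObjI rook_placements_def)
  qed
  then have "card (Obj n 0 0 0 0 2) = gen_eulerian 2 n 2"
    unfolding gen_eulerian_def by (simp add: card_image inj_on_def)
  with card_Obj[of n] show ?thesis by simp
qed


lemma alg:
  fixes x a b c p e g h i q :: "'a::idom"
  assumes A: "a = 1 + x*a" and B: "b = x*(p + b)" and C: "c = x*(q + e + c)"
    and P: "p = x*(2*p + a)" and E: "e = x*(h + 2*p + g + 2*e + b)"
    and G: "g = x*(h + 6*p + a + 3*g)" and H: "h = x*(2*h + 4*p + a + g)"
    and I: "i = x*(q + 3*p + a + 3*i)" and Q: "q = x*(2*q + 2*p + a + i)"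
  shows "(1-x)^3 * (1-2*x)^2 * (1-5*x+5*x^2) * c = x^2-x^3-x^4-3*x^5+5*x^6"
proof -
  define u where "u = 1 - x"
  define v where "v = 1 - 2*x"
  define W where "W = 1-5*x+5*x^2"
  have s1: "u*a = 1" using A unfolding u_def by algebra
  have s2: "u*v*p = x" using P s1 unfolding u_def v_def by algebra
  have s3: "u*v*a = v" using s1 by algebra
  have s7: "W*q = (1-3*x)*x*(2*p+a) + x^2*(3*p+a)" using I Q unfolding W_def by algebra
  have s4: "W*g = v*x*(6*p+a) + x^2*(4*p+a)" using G H unfolding W_def v_def by algebra
  have s5: "W*h = (1-3*x)*x*(4*p+a) + x^2*(6*p+a)" using G H unfolding W_def by algebra
  have s8: "u*b = x*p" using B unfolding u_def by algebra
  have s9: "v*e = x*(h+2*p+g+b)" using E unfolding v_def by algebra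
  have s10: "u*c = x*(q+e)" using C unfolding u_def by algebra
  have t1: "u*v*W*q = x*(1-3*x)*(2*x + v) + x^2*(3*x+v)" using s7 s2 s3 by algebra
  have t2: "u*v*W*g = v*x*(6*x+v) + x^2*(4*x+v)" using s4 s2 s3 by algebra
  have t3: "u*v*W*h = (1-3*x)*x*(4*x+v) + x^2*(6*x+v)" using s5 s2 s3 by algebra
  have t4: "u^2*v*b = x^2" using s8 s2 by algebra
  have t5a: "u^2*v^2*W*e = x*(u*(u*v*W*h) + 2*u*W*(u*v*p) + u*(u*v*W*g) + W*(u^2*v*b))"
    using s9 by algebra
  have t5: "u^2*v^2*W*e = x*(u*((1-3*x)*x*(4*x+v) + x^2*(6*x+v)) + 2*u*W*x + u*(v*x*(6*x+v) + x^2*(4*x+v)) + W*x^2)"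
    using t5a unfolding t2 t3 t4 s2 .
  have fa: "u^3*v^2*W*c = x*(u*v*(u*v*W*q) + u^2*v^2*W*e)"
    using s10 by algebra
  have f: "u^3*v^2*W*c = x*(u*v*(x*(1-3*x)*(2*x + v) + x^2*(3*x+v)) + x*(u*((1-3*x)*x*(4*x+v) + x^2*(6*x+v)) + 2*u*W*x + u*(v*x*(6*x+v) + x^2*(4*x+v)) + W*x^2))"
    using fa unfolding t1 t5 .
  show ?thesis using f unfolding u_def v_def W_def by algebra
qed


lemma Dset_sum: "(\<Sum>ch\<in>Dset ra rb ca cb. f ch) =
  (\<Sum>d\<le>2. \<Sum>uT\<le>ca. \<Sum>uF\<le>cb. \<Sum>vT\<le>ra. \<Sum>vF\<le>rb. f (d,uT,uF,vT,vF))"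
  unfolding Dset_def by (simp add: sum.cartesian_product)

lemma atMost2: "{..2::nat} = {0,1,2}" by auto
lemma atMost1: "{..1::nat} = {0,1}" by auto

lemmas evs = Dset_sum atMost2 atMost1 Pch_def nra_def nrb_def nca_def ncb_def nk_def

lemma ra: "Tc (Suc m) 0 0 0 0 0 = Tc m 0 0 0 0 0" by (simp add: evs)
lemma rb: "Tc (Suc m) 0 0 0 0 1 = Tc m 1 0 1 0 0 + Tc m 0 0 0 0 1" by (simp add: evs)
lemma rc: "Tc (Suc m) 0 0 0 0 2 = Tc m 2 0 2 0 0 + Tc m 1 0 1 0 1 + Tc m 0 0 0 0 2" by (simp add: evs)
lemma rw: "Tc (Suc m) 0 1 0 1 0 = Tc m 0 1 1 0 0 + Tc m 0 0 0 0 0 + Tc m 0 1 0 1 0" by (simp add: evs)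
lemma rp': "Tc (Suc m) 0 1 1 0 0 = 2 * Tc m 0 1 1 0 0 + Tc m 0 0 0 0 0" by (simp add: evs)
lemma rz: "Tc (Suc m) 1 0 0 1 0 = Tc m 1 0 1 0 0 + Tc m 0 0 0 0 0 + Tc m 1 0 0 1 0" by (simp add: evs)
lemma rp: "Tc (Suc m) 1 0 1 0 0 = 2 * Tc m 1 0 1 0 0 + Tc m 0 0 0 0 0" by (simp add: evs)
lemma re: "Tc (Suc m) 1 0 1 0 1 = Tc m 1 1 2 0 0 + 2 * Tc m 1 0 1 0 0 + Tc m 1 1 1 1 0 + 2 * Tc m 1 0 1 0 1 + Tc m 0 0 0 0 1"
  by (simp add: evs)
lemma rg: "Tc (Suc m) 1 1 1 1 0 = Tc m 1 1 2 0 0 + 2* Tc m 1 0 1 0 0 + 2* Tc m 0 1 1 0 0 + Tc m 0 0 0 0 0 + 3 * Tc m 1 1 1 1 0 + Tc m 1 0 0 1 0 + Tc m 0 1 0 1 0"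
  by (simp add: evs)
lemma rh: "Tc (Suc m) 1 1 2 0 0 = 2 * Tc m 1 1 2 0 0 + 2* Tc m 1 0 1 0 0 + 2* Tc m 0 1 1 0 0 + Tc m 0 0 0 0 0 + Tc m 1 1 1 1 0"
  by (simp add: evs)
lemma ri: "Tc (Suc m) 2 0 1 1 0 = Tc m 2 0 2 0 0 + 2* Tc m 1 0 1 0 0 + Tc m 0 0 0 0 0 + 3 * Tc m 2 0 1 1 0 + Tc m 1 0 0 1 0"
  by (simp add: evs)
lemma rq: "Tc (Suc m) 2 0 2 0 0 = 2 * Tc m 2 0 2 0 0 + 2* Tc m 1 0 1 0 0 + Tc m 0 0 0 0 0 + Tc m 2 0 1 1 0"
  by (simp add: evs)

declare Tc.simps(2)[simp del]

lemma eq_p': "Tc n 0 1 1 0 0 = Tc n 1 0 1 0 0"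
  proof (induction n)
  case (Suc n) then show ?case unfolding rp' rp by simp
qed simp
lemma eq_z: "Tc n 1 0 0 1 0 = Tc n 1 0 1 0 0"
  proof (induction n)
  case (Suc n) then show ?case unfolding rz rp by simp
qed simp
lemma eq_w: "Tc n 0 1 0 1 0 = Tc n 1 0 1 0 0"
  proof (induction n)
  case (Suc n) then show ?case unfolding rw rp eq_p' by simp
qed simp

definition FF :: "nat \<Rightarrow> nat \<Rightarrow> nat \<Rightarrow> nat \<Rightarrow> nat \<Rightarrow> rat fps" where
  "FF ra rb ca cb k = Abs_fps (\<lambda>n. of_nat (Tc n ra rb ca cb k))"

lemma FF_nth: "FF ra rb ca cb k $ n = of_nat (Tc n ra rb ca cb k)" by (simp add: FF_def)

lemma num_nth[simp]: "(numeral k * (f::rat fps)) $ n = numeral k * f $ n"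
  by (simp add: numeral_fps_const)

lemma fps_rec:
  fixes F G :: "rat fps"
  assumes "F $ 0 = c" "\<And>m. F $ Suc m = G $ m"
  shows "F = fps_const c + fps_X * G"
  unfolding fps_eq_iff
proof
  fix n show "F $ n = (fps_const c + fps_X * G) $ n"
    using assms by (cases n) simp_all
qed

lemma main_rat: "FF 0 0 0 0 2 = (fps_X^2 - fps_X^3 - fps_X^4 - 3 * fps_X^5 + 5 * fps_X^6) /
    ((1 - fps_X)^3 * (1 - 2 * fps_X)^2 * (1 - 5 * fps_X + 5 * fps_X^2))"
proof -
  let ?x = "fps_X :: rat fps"
  let ?a = "FF 0 0 0 0 0" let ?b = "FF 0 0 0 0 1" let ?c = "FF 0 0 0 0 2"
  let ?p = "FF 1 0 1 0 0" let ?e = "FF 1 0 1 0 1" let ?g = "FF 1 1 1 1 0"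
  let ?h = "FF 1 1 2 0 0" let ?i = "FF 2 0 1 1 0" let ?q = "FF 2 0 2 0 0"
  have A: "?a = 1 + ?x * ?a" using fps_rec[of ?a 1 ?a] ra by (simp add: FF_nth)
  have B: "?b = ?x * (?p + ?b)" using fps_rec[of ?b 0 "?p + ?b"] rb by (simp add: FF_nth)
  have C: "?c = ?x * (?q + ?e + ?c)" using fps_rec[of ?c 0 "?q + ?e + ?c"] rc by (simp add: FF_nth)
  have P: "?p = ?x * (2*?p + ?a)" using fps_rec[of ?p 0 "2*?p + ?a"] rp by (simp add: FF_nth)
  have E: "?e = ?x * (?h + 2*?p + ?g + 2*?e + ?b)"
    using fps_rec[of ?e 0 "?h + 2*?p + ?g + 2*?e + ?b"] re by (simp add: FF_nth)
  have G: "?g = ?x * (?h + 6*?p + ?a + 3*?g)"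
    using fps_rec[of ?g 0 "?h + 6*?p + ?a + 3*?g"] rg eq_p' eq_z eq_w by (simp add: FF_nth)
  have H: "?h = ?x * (2*?h + 4*?p + ?a + ?g)"
    using fps_rec[of ?h 0 "2*?h + 4*?p + ?a + ?g"] rh eq_p' by (simp add: FF_nth)
  have I: "?i = ?x * (?q + 3*?p + ?a + 3*?i)"
    using fps_rec[of ?i 0 "?q + 3*?p + ?a + 3*?i"] ri eq_z by (simp add: FF_nth)
  have Q: "?q = ?x * (2*?q + 2*?p + ?a + ?i)"
    using fps_rec[of ?q 0 "2*?q + 2*?p + ?a + ?i"] rq by (simp add: FF_nth)
  have D: "((1 - ?x)^3 * (1 - 2 * ?x)^2 * (1 - 5 * ?x + 5 * ?x^2)) * ?c =
       ?x^2 - ?x^3 - ?x^4 - 3 * ?x^5 + 5 * ?x^6"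
    by (rule alg[OF A B C P E G H I Q])
  define Den where "Den = ((1 - ?x)^3 * (1 - 2 * ?x)^2 * (1 - 5 * ?x + 5 * ?x^2))"
  have D0: "Den $ 0 \<noteq> 0" unfolding Den_def by simp
  have "?c = inverse Den * (Den * ?c)" using inverse_mult_eq_1[OF D0] by (simp add: mult.assoc[symmetric])
  also have "\<dots> = (?x^2 - ?x^3 - ?x^4 - 3 * ?x^5 + 5 * ?x^6) / Den"
    using D unfolding Den_def[symmetric] by (simp add: fps_divide_unit[OF D0] mult.commute)
  finally show ?thesis unfolding Den_def .
qed


theorem mainTheorem8:
  shows "Abs_fps (\<lambda>n. of_nat (gen_eulerian 2 n 2) :: rat) =
    (fps_X^2 - fps_X^3 - fps_X^4 - 3 * fps_X^5 + 5 * fps_X^6) /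
    ((1 - fps_X)^3 * (1 - 2 * fps_X)^2 * (1 - 5 * fps_X + 5 * fps_X^2))"
proof -
  have "Abs_fps (\<lambda>n. of_nat (gen_eulerian 2 n 2) :: rat) = FF 0 0 0 0 2"
    by (simp add: FF_def gen_eulerian_Tc)
  then show ?thesis using main_rat by simp
qed

end
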